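(* Let $V,W$ be complex vector spaces of dimension $n+1$ and let $f:\mathbb{P}(V)\to\mathbb{P}(W)$ be a morphism given in coordinates by $y_j=f_j(x)=\sum_{|I|=m}a_{j,I}x^I$, $j=0,\dots,n$, homogeneous of degree $m$ with no common zero other than the origin. Suppose that for integer vectors $c=(c_0,\dots,c_n)$, $b=(b_0,\dots,b_n)$ and a constant $C$ one has $\langle c,I\rangle-b_j=C$ whenever $a_{j,I}\neq0$ (equivalently, $g_{b,c}(\lambda)=(\mathrm{diag}(\lambda^{c_i}),\mathrm{diag}(\lambda^{b_i}))$ stabilizes $f$ in $PGL(V)\times PGL(W)$), and let $\Pi_j=\{I\in\mathbb{R}^{n+1}:\langle c,I\rangle-b_j=C\}$. Then every vertex of $\Delta$ is contained in one of the hyperplanes $\Pi_j$.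
   Context: $x^I=x_0^{i_0}\cdots x_n^{i_n}$, $|I|=\sum i_k$, $\langle c,I\rangle=\sum c_ki_k$. $\Delta\subset\mathbb{R}^{n+1}$ is the simplex with vertices $p_i=m e_i$, $i=0,\dots,n$, where $e_i$ are the standard basis vectors. *)

theory Defs
  imports Complex_Main
begin

definition multi_idx :: "nat \<Rightarrow> nat \<Rightarrow> (nat \<Rightarrow> nat) set" where
  "multi_idx n m = {I. (\<forall>k>n. I k = 0) \<and> (\<Sum>k\<le>n. I k) = m}"

definition xpow :: "nat \<Rightarrow> (nat \<Rightarrow> nat) \<Rightarrow> (nat \<Rightarrow> complex) \<Rightarrow> complex" where
  "xpow n I x = (\<Prod>k\<le>n. x k ^ I k)"

definition fcomp :: "nat \<Rightarrow> nat \<Rightarrow> (nat \<Rightarrow> (nat \<Rightarrow> nat) \<Rightarrow> complex) \<Rightarrow> nat \<Rightarrow> (nat \<Rightarrow> complex) \<Rightarrow> complex" where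
  "fcomp n m a j x = (\<Sum>I\<in>multi_idx n m. a j I * xpow n I x)"

text \<open>Vertex p_i = m e_i of the simplex Delta, as a point of R^{n+1} (coordinates 0..n).\<close>
definition vertex :: "nat \<Rightarrow> nat \<Rightarrow> (nat \<Rightarrow> real)" where
  "vertex m i = (\<lambda>k. if k = i then real m else 0)"

definition hyperplane :: "nat \<Rightarrow> (nat \<Rightarrow> int) \<Rightarrow> (nat \<Rightarrow> int) \<Rightarrow> int \<Rightarrow> nat \<Rightarrow> (nat \<Rightarrow> real) set" where
  "hyperplane n c b C j = {I. (\<Sum>k\<le>n. real_of_int (c k) * I k) - real_of_int (b j) = real_of_int C}"

end

theory Submission
  imports Defs
begin

lemma xpow_unit:
  assumes i: "i \<le> n" and I: "I \<in> multi_idx n m"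
  shows "xpow n I (\<lambda>k. if k = i then 1 else 0) = (if I = (\<lambda>k. if k = i then m else 0) then 1 else 0)"
proof (cases "I = (\<lambda>k. if k = i then m else 0)")
  case True
  then show ?thesis unfolding xpow_def by (auto intro: prod.neutral)
next
  case False
  have "\<exists>k\<le>n. k \<noteq> i \<and> I k \<noteq> 0"
  proof (rule ccontr)
    assume h: "\<not> ?thesis"
    have z: "\<forall>k. k \<noteq> i \<longrightarrow> I k = 0"
    proof (intro allI impI)
      fix k assume ki: "k \<noteq> i"
      show "I k = 0"
      proof (cases "k \<le> n")
        case True thus ?thesis using h ki by blast
      next
        case False thus ?thesis using I unfolding multi_idx_def by simp
      qed
    qed
    have "(\<Sum>k\<le>n. I k) = (\<Sum>k\<le>n. if k = i then I i else 0)"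
      by (rule sum.cong) (use z in auto)
    also have "\<dots> = I i" using i by simp
    finally have "I i = m" using I unfolding multi_idx_def by simp
    hence "I = (\<lambda>k. if k = i then m else 0)" using z by auto
    with False show False by simp
  qed
  then obtain k where k: "k \<le> n" "k \<noteq> i" "I k \<noteq> 0" by blast
  have "(\<Prod>k\<le>n. (if k = i then (1::complex) else 0) ^ I k) = 0"
    using k by (intro prod_zero) auto
  then show ?thesis using False unfolding xpow_def by simp
qed

lemma finite_multi_idx: "finite (multi_idx n m)"
proof (rule finite_subset)
  show "multi_idx n m \<subseteq> {f. \<forall>x. (x \<in> {..n} \<longrightarrow> f x \<in> {..m}) \<and> (x \<notin> {..n} \<longrightarrow> f x = 0)}"
  proof
    fix I assume I: "I \<in> multi_idx n m"
    have "I x \<le> m" if x: "x \<le> n" for x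
    proof -
      have "I x \<le> (\<Sum>k\<le>n. I k)" using x by (intro member_le_sum) auto
      thus ?thesis using I unfolding multi_idx_def by simp
    qed
    thus "I \<in> {f. \<forall>x. (x \<in> {..n} \<longrightarrow> f x \<in> {..m}) \<and> (x \<notin> {..n} \<longrightarrow> f x = 0)}"
      using I unfolding multi_idx_def by auto
  qed
  show "finite {f. \<forall>x. (x \<in> {..n} \<longrightarrow> f x \<in> {..m}) \<and> (x \<notin> {..n} \<longrightarrow> f x = (0::nat))}"
    by (rule finite_set_of_finite_funs) auto
qed

theorem mainTheorem4:
  fixes n m :: nat
    and a :: "nat \<Rightarrow> (nat \<Rightarrow> nat) \<Rightarrow> complex"
    and c b :: "nat \<Rightarrow> int" and C :: int
  assumes no_common_zero:
    "\<And>x :: nat \<Rightarrow> complex. (\<forall>j\<le>n. fcomp n m a j x = 0) \<Longrightarrow> (\<forall>k\<le>n. x k = 0)"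
  assumes stab:
    "\<And>j I. j \<le> n \<Longrightarrow> I \<in> multi_idx n m \<Longrightarrow> a j I \<noteq> 0 \<Longrightarrow>
       (\<Sum>k\<le>n. c k * int (I k)) - b j = C"
  shows "\<forall>i\<le>n. \<exists>j\<le>n. vertex m i \<in> hyperplane n c b C j"
proof (intro allI impI)
  fix i assume i: "i \<le> n"
  define J where "J = (\<lambda>k. if k = i then m else (0::nat))"
  define x where "x = (\<lambda>k. if k = i then (1::complex) else 0)"
  have J: "J \<in> multi_idx n m" using i unfolding multi_idx_def J_def
    by (auto simp: sum.delta)
  have f: "fcomp n m a j x = a j J" for j
  proof -
    have "fcomp n m a j x = (\<Sum>I\<in>multi_idx n m. if I = J then a j I else 0)"
      unfolding fcomp_def x_def
      by (rule sum.cong) (auto simp: xpow_unit[OF i] J_def)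
    also have "\<dots> = a j J" using J finite_multi_idx by (simp add: sum.delta')
    finally show ?thesis .
  qed
  have "\<not> (\<forall>k\<le>n. x k = 0)" using i unfolding x_def by auto
  then obtain j where j: "j \<le> n" "fcomp n m a j x \<noteq> 0" using no_common_zero by blast
  hence "a j J \<noteq> 0" using f by simp
  hence e: "(\<Sum>k\<le>n. c k * int (J k)) - b j = C" using stab j J by blast
  have s1: "(\<Sum>k\<le>n. c k * int (J k)) = c i * int m" using i unfolding J_def
    by (simp add: if_distrib sum.delta cong: if_cong)
  have s2: "(\<Sum>k\<le>n. real_of_int (c k) * vertex m i k) = real_of_int (c i) * real m"
    using i unfolding vertex_def by (simp add: if_distrib sum.delta cong: if_cong)
  have "vertex m i \<in> hyperplane n c b C j"
  proof -
    have "c i * int m - b j = C" using e unfolding s1 .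
    hence "real_of_int (c i * int m - b j) = real_of_int C" by (rule arg_cong)
    hence h: "real_of_int (c i) * real m - real_of_int (b j) = real_of_int C"
      by (simp only: of_int_diff of_int_mult of_int_of_nat_eq)
    have "(\<Sum>k\<le>n. real_of_int (c k) * vertex m i k) - real_of_int (b j) = real_of_int C"
      by (simp only: s2 h)
    thus ?thesis unfolding hyperplane_def mem_Collect_eq .
  qed
  with j show "\<exists>j\<le>n. vertex m i \<in> hyperplane n c b C j" by blast
qed

end
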